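(* Let $\Gamma$ act by isometries on metric spaces $(X,d_X)$ and $(Y,d_Y)$, and let $\hat X\supseteq X$ be a partial compactification such that the $\Gamma$-action extends to a proper cocompact action on $\hat X\times Y$; let $d_\Gamma$ be a $\Gamma$-invariant proper metric on $\hat X\times Y$ inducing its topology. Let $(x_i,y_i)$ and $(x_i',y_i')$ be sequences in $\hat X\times Y$. If $d_Y(y_i,y_i')\to\infty$, then $d_\Gamma((x_i,y_i),(x_i',y_i'))\to\infty$.
   Context: The action of $\Gamma$ on $\hat X\times Y$ is diagonal; $d_X$, $d_Y$ are $\Gamma$-invariant. A metric is proper if closed bounded sets are compact. *)

theory Defs
  imports "HOL-Analysis.Analysis" "HOL-Algebra.Group_Action"
begin

definition partial_compactification :: "'a topology \<Rightarrow> 'a set \<Rightarrow> ('a \<Rightarrow> 'a \<Rightarrow> real) \<Rightarrow> bool" where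
  "partial_compactification TX X dX \<longleftrightarrow>
     X \<subseteq> topspace TX \<and> openin TX X \<and> TX closure_of X = topspace TX \<and>
     subtopology TX X = Metric_space.mtopology X dX"

text \<open>Diagonal action on the product A \<times> B (extensional, as required by BijGroup).\<close>
definition diag_action :: "'a set \<Rightarrow> 'b set \<Rightarrow> ('g \<Rightarrow> 'a \<Rightarrow> 'a) \<Rightarrow> ('g \<Rightarrow> 'b \<Rightarrow> 'b)
    \<Rightarrow> 'g \<Rightarrow> ('a \<times> 'b) \<Rightarrow> ('a \<times> 'b)" where
  "diag_action A B \<phi> \<psi> g = restrict (\<lambda>(a, b). (\<phi> g a, \<psi> g b)) (A \<times> B)"

definition proper_action :: "('g, 'm) monoid_scheme \<Rightarrow> 'z topology \<Rightarrow> ('g \<Rightarrow> 'z \<Rightarrow> 'z) \<Rightarrow> bool" where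
  "proper_action G T act \<longleftrightarrow>
     (\<forall>g\<in>carrier G. homeomorphic_map T T (act g)) \<and>
     (\<forall>K. compactin T K \<longrightarrow> finite {g \<in> carrier G. act g ` K \<inter> K \<noteq> {}})"

definition cocompact_action :: "('g, 'm) monoid_scheme \<Rightarrow> 'z topology \<Rightarrow> ('g \<Rightarrow> 'z \<Rightarrow> 'z) \<Rightarrow> bool" where
  "cocompact_action G T act \<longleftrightarrow>
     (\<exists>K. compactin T K \<and> (\<Union>g\<in>carrier G. act g ` K) = topspace T)"

definition proper_metric :: "'z set \<Rightarrow> ('z \<Rightarrow> 'z \<Rightarrow> real) \<Rightarrow> bool" where
  "proper_metric M d \<longleftrightarrow>
     (\<forall>S. closedin (Metric_space.mtopology M d) S \<and> Metric_space.mbounded M d S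
          \<longrightarrow> compactin (Metric_space.mtopology M d) S)"

end

theory Submission
  imports Defs
begin

theorem lemma6p5:
  fixes G :: "('g, 'm) monoid_scheme"
    and TX :: "'a topology" and X :: "'a set" and dX :: "'a \<Rightarrow> 'a \<Rightarrow> real"
    and Y :: "'b set" and dY :: "'b \<Rightarrow> 'b \<Rightarrow> real"
    and \<phi> :: "'g \<Rightarrow> 'a \<Rightarrow> 'a" and \<psi> :: "'g \<Rightarrow> 'b \<Rightarrow> 'b"
    and dG :: "'a \<times> 'b \<Rightarrow> 'a \<times> 'b \<Rightarrow> real"
    and x x' :: "nat \<Rightarrow> 'a" and y y' :: "nat \<Rightarrow> 'b"
  assumes grp: "group G"
    and mX: "Metric_space X dX" and mY: "Metric_space Y dY"
    and pc: "partial_compactification TX X dX"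
    and actX: "group_action G (topspace TX) \<phi>"
    and presX: "\<forall>g\<in>carrier G. \<phi> g ` X \<subseteq> X"
    and isoX: "\<forall>g\<in>carrier G. \<forall>a\<in>X. \<forall>b\<in>X. dX (\<phi> g a) (\<phi> g b) = dX a b"
    and actY: "group_action G Y \<psi>"
    and isoY: "\<forall>g\<in>carrier G. \<forall>a\<in>Y. \<forall>b\<in>Y. dY (\<psi> g a) (\<psi> g b) = dY a b"
    and propact: "proper_action G (prod_topology TX (Metric_space.mtopology Y dY))
                 (diag_action (topspace TX) Y \<phi> \<psi>)"
    and cocpt: "cocompact_action G (prod_topology TX (Metric_space.mtopology Y dY))
                 (diag_action (topspace TX) Y \<phi> \<psi>)"
    and mG: "Metric_space (topspace TX \<times> Y) dG"
    and invG: "\<forall>g\<in>carrier G. \<forall>p\<in>topspace TX \<times> Y. \<forall>q\<in>topspace TX \<times> Y.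
                 dG (diag_action (topspace TX) Y \<phi> \<psi> g p) (diag_action (topspace TX) Y \<phi> \<psi> g q) = dG p q"
    and properG: "proper_metric (topspace TX \<times> Y) dG"
    and topG: "Metric_space.mtopology (topspace TX \<times> Y) dG
                 = prod_topology TX (Metric_space.mtopology Y dY)"
    and seqs: "\<forall>i. x i \<in> topspace TX \<and> y i \<in> Y \<and> x' i \<in> topspace TX \<and> y' i \<in> Y"
    and divY: "filterlim (\<lambda>i. dY (y i) (y' i)) at_top sequentially"
  shows "filterlim (\<lambda>i. dG (x i, y i) (x' i, y' i)) at_top sequentially"
proof -
  interpret MG: Metric_space "topspace TX \<times> Y" dG by (rule mG)
  interpret MY: Metric_space Y dY by (rule mY)
  let ?A = "diag_action (topspace TX) Y \<phi> \<psi>"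
  let ?PT = "prod_topology TX (Metric_space.mtopology Y dY)"
  have tsp: "topspace ?PT = topspace TX \<times> Y" by simp
  obtain K where K: "compactin ?PT K" "(\<Union>g\<in>carrier G. ?A g ` K) = topspace ?PT"
    using cocpt unfolding cocompact_action_def by blast
  have KM: "K \<subseteq> topspace TX \<times> Y" using compactin_subset_topspace[OF K(1)] by simp
  have "MG.mbounded K" using MG.compactin_imp_mbounded K(1) topG by simp
  then obtain c r where cr: "K \<subseteq> MG.mcball c r" unfolding MG.mbounded_def by blast
  have key: "\<exists>D. \<forall>i. dG (x i, y i) (x' i, y' i) \<le> R \<longrightarrow> dY (y i) (y' i) \<le> D" for R
  proof -
    define C where "C = MG.mcball c (r + \<bar>R\<bar>)"
    have "compactin MG.mtopology C"
      using properG unfolding proper_metric_def C_def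
      using MG.closedin_mcball MG.mbounded_mcball by blast
    hence "compactin ?PT C" using topG by simp
    hence "compactin MY.mtopology (snd ` C)"
      using image_compactin continuous_map_snd by blast
    hence "MY.mbounded (snd ` C)" by (rule MY.compactin_imp_mbounded)
    then obtain D where D: "\<forall>a\<in>snd ` C. \<forall>b\<in>snd ` C. dY a b \<le> D"
      unfolding MY.mbounded_alt by blast
    show ?thesis
    proof (intro exI allI impI)
      fix i assume dR: "dG (x i, y i) (x' i, y' i) \<le> R"
      have "(x i, y i) \<in> topspace ?PT" using seqs by simp
      then obtain g k where g: "g \<in> carrier G" and k: "k \<in> K" and pk: "(x i, y i) = ?A g k"
        using K(2) by blast
      have kM: "k \<in> topspace TX \<times> Y" using k KM by blast
      obtain a where a: "a \<in> topspace TX" "\<phi> g a = x' i"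
        using group_action.surj_prop[OF actX g] seqs by (metis imageE)
      obtain b where b: "b \<in> Y" "\<psi> g b = y' i"
        using group_action.surj_prop[OF actY g] seqs by (metis imageE)
      have pab: "(x' i, y' i) = ?A g (a, b)" using a b by (simp add: diag_action_def)
      have dk: "dG k (a, b) \<le> R"
        using invG g kM a b dR pk pab by (metis SigmaI)
      have yk: "y i = \<psi> g (snd k)" using pk kM
        by (cases k) (auto simp: diag_action_def)
      have dyy: "dY (y i) (y' i) = dY (snd k) b"
        using isoY g kM b yk by (metis mem_Sigma_iff prod.collapse)
      have kr: "k \<in> MG.mcball c r" using k cr by blast
      hence kc: "k \<in> C" unfolding C_def MG.in_mcball by (smt (verit) abs_ge_zero)
      have "dG c (a, b) \<le> dG c k + dG k (a, b)"
        using MG.triangle kc a b kM unfolding C_def by auto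
      also have "\<dots> \<le> r + \<bar>R\<bar>" using kr dk by auto
      finally have abc: "(a, b) \<in> C" using kc a b unfolding C_def by auto
      show "dY (y i) (y' i) \<le> D"
        using D kc abc dyy by (metis image_eqI snd_conv)
    qed
  qed
  show ?thesis
    unfolding filterlim_at_top
  proof
    fix Z :: real
    obtain D where D: "\<forall>i. dG (x i, y i) (x' i, y' i) \<le> Z \<longrightarrow> dY (y i) (y' i) \<le> D"
      using key by blast
    have "eventually (\<lambda>i. D + 1 \<le> dY (y i) (y' i)) sequentially"
      using divY unfolding filterlim_at_top by blast
    thus "eventually (\<lambda>i. Z \<le> dG (x i, y i) (x' i, y' i)) sequentially"
      by eventually_elim (metis D linorder_not_le less_le_not_le add_le_same_cancel1 not_one_le_zero order_trans)
  qed
qed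

end
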